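(* Let $1<p<\infty$ and $W:\mathbb{M}^{3\times3}\to[0,+\infty]$ satisfy (H1)–(H5) below. Let $\Omega\subset\mathbb{R}^2$ be open and bounded, $\eta>0$, and $G:\overline\Omega\to\mathbb{M}^{3\times2}$ uniformly continuous with $|G^1(x)\wedge G^2(x)|\geq\eta$ for every $x\in\overline\Omega$. For $j\geq1$ let $\Lambda_j(x):=\{\zeta\in\mathbb{R}^3:\det(G(x)|\zeta)\geq1/j,\ |\zeta|\leq j\}$ for $x\in\overline\Omega$. Then there exists $j(\eta,\|G\|_{L^\infty})$ such that for every $j\geq j(\eta,\|G\|_{L^\infty})$, $$\inf_{\phi\in C^\infty(\overline\Omega,\Lambda_j)}\int_\Omega W(G(x)|\phi(x))\,dx=\int_\Omega\inf_{\zeta\in\Lambda_j(x)}W(G(x)|\zeta)\,dx,$$ where $C^\infty(\overline\Omega,\Lambda_j)$ denotes the maps $\phi\in C^\infty(\overline\Omega,\mathbb{R}^3)$ with $\phi(x)\in\Lambda_j(x)$ for all $x\in\overline\Omega$.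
   Context: Hypotheses: (H1) $W$ continuous as a $[0,+\infty]$-valued function; (H2) $W(RF)=W(F)$ for $R\in SO(3)$; (H3) $W(F)<\infty$ if $\det F>0$ and $W(F)=+\infty$ if $\det F\leq0$; (H4) $W(F)\geq C_1|F|^p-1/C_1$; (H5) for each $\delta>0$, $W(F)\leq c_\delta(1+|F|^p)$ when $\det F\geq\delta$. $G^1,G^2$ are the columns of $G$, $\wedge$ the vector product, $(A|\zeta)$ the $3\times3$ matrix with columns $A^1,A^2,\zeta$. *)

theory Defs
  imports "HOL-Analysis.Analysis" "HOL-Analysis.Cross3"
begin

primrec Ck :: "nat \<Rightarrow> ('a::euclidean_space \<Rightarrow> 'b::real_normed_vector) \<Rightarrow> bool" where
  "Ck 0 f = continuous_on UNIV f"
| "Ck (Suc k) f = (\<exists>f'. (\<forall>x. (f has_derivative f' x) (at x)) \<and> (\<forall>v. Ck k (\<lambda>x. f' x v)))"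

definition smooth_map :: "('a::euclidean_space \<Rightarrow> 'b::real_normed_vector) \<Rightarrow> bool" where
  "smooth_map f = (\<forall>k. Ck k f)"

text \<open>The 3x3 matrix (A|z) with columns A^1, A^2, z (A a 3x2 matrix).\<close>
definition augm :: "real^2^3 \<Rightarrow> real^3 \<Rightarrow> real^3^3" where
  "augm A z = (\<chi> i k. if k = 1 then A $ i $ 1 else if k = 2 then A $ i $ 2 else z $ i)"

definition Lambda :: "(real^2 \<Rightarrow> real^2^3) \<Rightarrow> nat \<Rightarrow> real^2 \<Rightarrow> (real^3) set" where
  "Lambda G j x = {z. det (augm (G x) z) \<ge> 1 / real j \<and> norm z \<le> real j}"

definition SO3 :: "(real^3^3) set" where
  "SO3 = {R. orthogonal_matrix R \<and> det R = 1}"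

end

theory Submission
  imports Defs
begin


definition nv :: "real^2^3 \<Rightarrow> real^3" where
  "nv A = cross3 (column 1 A) (column 2 A)"

lemma det_augm: "det (augm A z) = z \<bullet> nv A"
  unfolding augm_def nv_def det_3 cross3_def column_def inner_vec_def sum_3
  by (simp add: vector_def algebra_simps)

lemma augm_tendsto[tendsto_intros]:
  assumes "(A \<longlongrightarrow> a) F" "(z \<longlongrightarrow> b) F"
  shows "((\<lambda>x. augm (A x) (z x)) \<longlongrightarrow> augm a b) F"
  unfolding augm_def
  by (intro tendsto_vec_lambda) (auto intro!: tendsto_intros assms)

lemma augm_continuous_on[continuous_intros]:
  assumes "continuous_on S A" "continuous_on S z"
  shows "continuous_on S (\<lambda>x. augm (A x) (z x))"
  using assms unfolding continuous_on_def by (auto intro!: tendsto_intros)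

lemma nv_tendsto[tendsto_intros]:
  assumes "(A \<longlongrightarrow> a) F"
  shows "((\<lambda>x. nv (A x)) \<longlongrightarrow> nv a) F"
proof (rule vec_tendstoI)
  fix i :: 3
  have "i = 1 \<or> i = 2 \<or> i = 3" using exhaust_3 by blast
  then show "((\<lambda>x. nv (A x) $ i) \<longlongrightarrow> nv a $ i) F"
    unfolding nv_def cross3_def column_def
    by (elim disjE; simp add: vector_3; intro tendsto_intros assms)
qed

lemma augm_add: "augm (A + B) (z + w) = augm A z + augm B w"
  unfolding augm_def by (simp add: vec_eq_iff)

lemma augm_diff: "augm (A - B) (z - w) = augm A z - augm B w"
  unfolding augm_def by (simp add: vec_eq_iff)

lemma norm_augm_A: "norm (augm A 0) = norm A"
  unfolding augm_def norm_vec_def L2_set_def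
  by (simp add: sum_3 sum_2)

lemma norm_augm_z: "norm (augm 0 z) = norm z"
  unfolding augm_def norm_vec_def L2_set_def
  by (simp add: sum_3 sum_2)

lemma norm_augm_le: "norm (augm A z) \<le> norm A + norm z"
proof -
  have "augm A z = augm A 0 + augm 0 z" using augm_add[of A 0 0 z] by simp
  then show ?thesis using norm_triangle_ineq[of "augm A 0" "augm 0 z"] norm_augm_A norm_augm_z by simp
qed



lemma rpf_deriv:
  fixes p :: "'a::euclidean_space \<Rightarrow> real"
  assumes "real_polynomial_function p"
  shows "\<exists>p'. (\<forall>x. (p has_derivative p' x) (at x)) \<and> (\<forall>v. real_polynomial_function (\<lambda>x. p' x v))"
  using assms
proof (induction p rule: real_polynomial_function.induct)
  case (linear f)
  then show ?case
    by (intro exI[of _ "\<lambda>x. f"]) (auto intro: bounded_linear_imp_has_derivative)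
next
  case (const c)
  then show ?case by (intro exI[of _ "\<lambda>x v. 0"]) auto
next
  case (add f g)
  then obtain f' g' where f': "\<forall>x. (f has_derivative f' x) (at x)" "\<forall>v. real_polynomial_function (\<lambda>x. f' x v)"
    and g': "\<forall>x. (g has_derivative g' x) (at x)" "\<forall>v. real_polynomial_function (\<lambda>x. g' x v)" by blast
  show ?case
    by (rule exI[of _ "\<lambda>x v. f' x v + g' x v"]) (auto intro!: has_derivative_add real_polynomial_function.intros(3) simp: f' g')
next
  case (mult f g)
  then obtain f' g' where f': "\<forall>x. (f has_derivative f' x) (at x)" "\<forall>v. real_polynomial_function (\<lambda>x. f' x v)"
    and g': "\<forall>x. (g has_derivative g' x) (at x)" "\<forall>v. real_polynomial_function (\<lambda>x. g' x v)" by blast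
  show ?case
    by (rule exI[of _ "\<lambda>x v. f x * g' x v + f' x v * g x"])
      (auto intro!: has_derivative_mult f' g' real_polynomial_function.intros(3) real_polynomial_function.intros(4) mult.hyps simp: f' g')
qed

lemma pf_deriv:
  fixes p :: "'a::euclidean_space \<Rightarrow> 'b::euclidean_space"
  assumes "polynomial_function p"
  shows "\<exists>p'. (\<forall>x. (p has_derivative p' x) (at x)) \<and> (\<forall>v. polynomial_function (\<lambda>x. p' x v))"
proof -
  have "\<forall>b\<in>Basis. \<exists>q. (\<forall>x. ((\<lambda>x. p x \<bullet> b) has_derivative q x) (at x)) \<and> (\<forall>v. real_polynomial_function (\<lambda>x. q x v))"
    using assms rpf_deriv unfolding polynomial_function_iff_Basis_inner by blast
  then obtain q where q: "\<And>b. b \<in> Basis \<Longrightarrow> (\<forall>x. ((\<lambda>x. p x \<bullet> b) has_derivative q b x) (at x)) \<and> (\<forall>v. real_polynomial_function (\<lambda>x. q b x v))"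
    by metis
  have peq: "p = (\<lambda>x. \<Sum>b\<in>Basis. (p x \<bullet> b) *\<^sub>R b)" by (simp add: euclidean_representation)
  show ?thesis
  proof (rule exI[of _ "\<lambda>x v. \<Sum>b\<in>Basis. q b x v *\<^sub>R b"], intro conjI allI)
    fix x
    show "(p has_derivative (\<lambda>v. \<Sum>b\<in>Basis. q b x v *\<^sub>R b)) (at x)"
      apply (subst peq)
      apply (rule has_derivative_sum)
      apply (rule has_derivative_scaleR_left)
      using q by auto
  next
    fix v
    show "polynomial_function (\<lambda>x. \<Sum>b\<in>Basis. q b x v *\<^sub>R b)"
      apply (rule polynomial_function_sum, simp)
      apply (rule polynomial_function_mult)
      using q real_polynomial_function_eq by auto
  qed
qed

lemma pf_Ck:
  "\<forall>p :: 'a::euclidean_space \<Rightarrow> 'b::euclidean_space. polynomial_function p \<longrightarrow> Ck k p"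
proof (induction k)
  case 0
  then show ?case by (auto intro: continuous_on_polymonial_function)
next
  case (Suc k)
  show ?case
  proof (intro allI impI)
    fix p :: "'a \<Rightarrow> 'b" assume "polynomial_function p"
    then obtain p' where "\<forall>x. (p has_derivative p' x) (at x)" "\<forall>v. polynomial_function (\<lambda>x. p' x v)"
      using pf_deriv by blast
    then show "Ck (Suc k) p" using Suc by auto
  qed
qed

lemma pf_smooth: "polynomial_function (p :: 'a::euclidean_space \<Rightarrow> 'b::euclidean_space) \<Longrightarrow> smooth_map p"
  unfolding smooth_map_def using pf_Ck by blast



definition psi :: "nat \<Rightarrow> 'a::metric_space set \<Rightarrow> 'a \<Rightarrow> real" where
  "psi n U y = min 1 (real n * infdist y (- U))"

fun phi :: "nat \<Rightarrow> ('a::metric_space set \<times> 'b::real_normed_vector) list \<Rightarrow> ('a \<Rightarrow> 'b) \<Rightarrow> 'a \<Rightarrow> 'b" where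
  "phi n [] z0 y = z0 y"
| "phi n ((U,\<zeta>)#L) z0 y = psi n U y *\<^sub>R \<zeta> + (1 - psi n U y) *\<^sub>R phi n L z0 y"

fun sel :: "('a set \<times> 'b) list \<Rightarrow> ('a \<Rightarrow> 'b) \<Rightarrow> 'a \<Rightarrow> 'b" where
  "sel [] z0 y = z0 y"
| "sel ((U,\<zeta>)#L) z0 y = (if y \<in> U then \<zeta> else sel L z0 y)"

lemma psi_nonneg: "0 \<le> psi n U y"
  unfolding psi_def by (simp add: infdist_nonneg)

lemma psi_le1: "psi n U y \<le> 1"
  unfolding psi_def by simp

lemma psi_out: "y \<notin> U \<Longrightarrow> psi n U y = 0"
  unfolding psi_def by simp

lemma psi_in:
  assumes "open U" "U \<noteq> UNIV" "y \<in> U"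
  shows "eventually (\<lambda>n. psi n U y = 1) sequentially"
proof -
  have "infdist y (- U) \<noteq> 0"
    using in_closed_iff_infdist_zero[of "-U" y] assms by auto
  then have d: "infdist y (- U) > 0" using infdist_nonneg[of y "-U"] by linarith
  show ?thesis
  proof (rule eventually_sequentiallyI[of "nat \<lceil>1 / infdist y (- U)\<rceil>"])
    fix n assume "nat \<lceil>1 / infdist y (- U)\<rceil> \<le> n"
    then have "1 / infdist y (- U) \<le> real n" by linarith
    then have "1 \<le> real n * infdist y (- U)" using d by (simp add: field_simps)
    then show "psi n U y = 1" unfolding psi_def by simp
  qed
qed

lemma psi_cont[continuous_intros]: "continuous_on S (psi n U)"
  unfolding psi_def by (intro continuous_intros)

lemma phi_cont: "continuous_on S z0 \<Longrightarrow> continuous_on S (phi n L z0)"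
proof (induction L)
  case Nil
  then show ?case by (simp add: continuous_on_eq[of S z0])
next
  case (Cons a L)
  obtain U \<zeta> where a: "a = (U, \<zeta>)" by fastforce
  have "continuous_on S (\<lambda>y. psi n U y *\<^sub>R \<zeta> + (1 - psi n U y) *\<^sub>R phi n L z0 y)"
  proof -
    have h: "continuous_on S (phi n L z0)" using Cons by simp
    show ?thesis by (intro continuous_on_add continuous_on_scaleR continuous_on_diff psi_cont continuous_on_const h)
  qed
  then show ?case unfolding a by (simp add: continuous_on_eq)
qed

lemma phi_mem:
  assumes conv: "\<And>y a b t. P y a \<Longrightarrow> P y b \<Longrightarrow> 0 \<le> t \<Longrightarrow> t \<le> 1 \<Longrightarrow> P y (t *\<^sub>R a + (1 - t) *\<^sub>R b)"
    and z0: "\<And>y. y \<in> S \<Longrightarrow> P y (z0 y)"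
    and L: "\<And>U \<zeta> y. (U, \<zeta>) \<in> set L \<Longrightarrow> y \<in> S \<Longrightarrow> y \<in> U \<Longrightarrow> P y \<zeta>"
    and y: "y \<in> S"
  shows "P y (phi n L z0 y)"
  using L
proof (induction L)
  case Nil
  then show ?case using z0 y by simp
next
  case (Cons a L)
  obtain U \<zeta> where a: "a = (U, \<zeta>)" by fastforce
  have IH: "P y (phi n L z0 y)" using Cons by auto
  show ?case
  proof (cases "y \<in> U")
    case True
    then have "P y \<zeta>" using Cons.prems[of U \<zeta> y] a y by auto
    then show ?thesis unfolding a using conv[OF _ IH psi_nonneg psi_le1] by simp
  next
    case False
    then show ?thesis unfolding a using IH psi_out[OF False] by simp
  qed
qed

lemma phi_event:
  assumes "\<And>U \<zeta>. (U, \<zeta>) \<in> set L \<Longrightarrow> open U \<and> U \<noteq> UNIV"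
  shows "eventually (\<lambda>n. phi n L z0 y = sel L z0 y) sequentially"
  using assms
proof (induction L)
  case Nil
  then show ?case by simp
next
  case (Cons a L)
  obtain U \<zeta> where a: "a = (U, \<zeta>)" by fastforce
  show ?case
  proof (cases "y \<in> U")
    case True
    have "open U" "U \<noteq> UNIV" using Cons.prems[of U \<zeta>] a by auto
    from psi_in[OF this True] show ?thesis
      unfolding a using True by (auto elim: eventually_mono)
  next
    case False
    have "eventually (\<lambda>n. phi n L z0 y = sel L z0 y) sequentially" using Cons by auto
    then show ?thesis unfolding a using False psi_out[OF False] by (auto elim: eventually_mono)
  qed
qed

lemma sel_mem:
  assumes "y \<in> (\<Union>p\<in>set L. fst p)"
  shows "\<exists>U \<zeta>. (U, \<zeta>) \<in> set L \<and> y \<in> U \<and> sel L z0 y = \<zeta>"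
  using assms
proof (induction L)
  case Nil
  then show ?case by simp
next
  case (Cons a L)
  obtain U \<zeta> where a: "a = (U, \<zeta>)" by fastforce
  show ?case using Cons unfolding a by (cases "y \<in> U") auto
qed



lemma det3_cont: "continuous_on S (det :: real^3^3 \<Rightarrow> real)"
proof -
  have "continuous_on S (\<lambda>F::real^3^3. F$1$1 * F$2$2 * F$3$3 + F$1$2 * F$2$3 * F$3$1 + F$1$3 * F$2$1 * F$3$2
     - F$1$1 * F$2$3 * F$3$2 - F$1$2 * F$2$1 * F$3$3 - F$1$3 * F$2$2 * F$3$1)"
    by (intro continuous_intros)
  then show ?thesis by (simp add: det_3[abs_def])
qed

lemma Lambda_iff: "z \<in> Lambda G j y \<longleftrightarrow> 1 / real j \<le> z \<bullet> nv (G y) \<and> norm z \<le> real j"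
  unfolding Lambda_def det_augm by simp

lemma lsc:
  fixes W :: "real^3^3 \<Rightarrow> ennreal" and G :: "real^2 \<Rightarrow> real^2^3"
  assumes W: "continuous_on UNIV W" and G: "continuous_on K G" and x: "x \<in> K"
    and c: "c < (INF z\<in>Lambda G j x. W (augm (G x) z))"
  shows "eventually (\<lambda>y. c < (INF z\<in>Lambda G j y. W (augm (G y) z))) (at x within K)"
proof -
  obtain c' where c': "c < c'" "c' < (INF z\<in>Lambda G j x. W (augm (G x) z))"
    using dense[OF c] by blast
  define Ob where "Ob = {F::real^3^3. det F < 1 / real j} \<union> {F. c' < W F}"
  have "open {F::real^3^3. det F < 1 / real j}"
    using continuous_on_open_vimage[OF open_UNIV, of det] det3_cont[of UNIV]
    by (auto dest!: spec[of _ "{..<1/real j}"] simp: vimage_def)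
  moreover have "open {F. c' < W F}"
    using continuous_on_open_vimage[OF open_UNIV, of W] W
    by (auto dest!: spec[of _ "{c'<..}"] simp: vimage_def)
  ultimately have oO: "open Ob" unfolding Ob_def by auto
  define A where "A = (\<lambda>z. augm (G x) z) ` cball 0 (real j)"
  have cA: "compact A" unfolding A_def
    by (intro compact_continuous_image continuous_intros) auto
  have AO: "A \<subseteq> Ob"
  proof
    fix F assume "F \<in> A"
    then obtain z where z: "norm z \<le> real j" "F = augm (G x) z" unfolding A_def by auto
    show "F \<in> Ob"
    proof (cases "det F < 1 / real j")
      case True then show ?thesis unfolding Ob_def by auto
    next
      case False
      then have "z \<in> Lambda G j x" unfolding Lambda_def using z by auto
      then have "(INF z\<in>Lambda G j x. W (augm (G x) z)) \<le> W F" using z by (auto intro: INF_lower)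
      then show ?thesis using c' unfolding Ob_def by auto
    qed
  qed
  obtain e where e: "e > 0" "(\<Union>F\<in>A. ball F e) \<subseteq> Ob"
    using compact_subset_open_imp_ball_epsilon_subset[OF cA oO AO] by blast
  have "((\<lambda>y. G y) \<longlongrightarrow> G x) (at x within K)"
    using G x by (simp add: continuous_on_eq_continuous_within continuous_within)
  then have ev: "eventually (\<lambda>y. dist (G y) (G x) < e) (at x within K)"
    using e(1) by (rule tendstoD)
  show ?thesis
  proof (rule eventually_mono[OF ev])
    fix y assume dy: "dist (G y) (G x) < e"
    have "c' \<le> W (augm (G y) z)" if z: "z \<in> Lambda G j y" for z
    proof -
      have nz: "norm z \<le> real j" and dz: "det (augm (G y) z) \<ge> 1 / real j" using z unfolding Lambda_def by auto
      have "augm (G x) z \<in> A" unfolding A_def using nz by auto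
      moreover have "dist (augm (G y) z) (augm (G x) z) < e"
      proof -
        have "augm (G y) z - augm (G x) z = augm (G y - G x) 0"
          using augm_diff[of "G y" "G x" z z] by simp
        then show ?thesis using dy norm_augm_A by (simp add: dist_norm)
      qed
      ultimately have "augm (G y) z \<in> Ob" using e(2) by (force simp: dist_commute)
      then show ?thesis using dz unfolding Ob_def by auto
    qed
    then have "c' \<le> (INF z\<in>Lambda G j y. W (augm (G y) z))" by (rule INF_greatest)
    then show "c < (INF z\<in>Lambda G j y. W (augm (G y) z))" using c' by auto
  qed
qed



lemma ennreal_lt_add_pos: "a < (top::ennreal) \<Longrightarrow> 0 < e \<Longrightarrow> a < a + ennreal e"
  by simp

lemma lsc_add:
  fixes W :: "real^3^3 \<Rightarrow> ennreal" and G :: "real^2 \<Rightarrow> real^2^3"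
  assumes W: "continuous_on UNIV W" and G: "continuous_on K G" and x: "x \<in> K"
    and fin: "(INF z\<in>Lambda G j x. W (augm (G x) z)) < top" and e: "0 < e"
  shows "eventually (\<lambda>y. (INF z\<in>Lambda G j x. W (augm (G x) z)) < (INF z\<in>Lambda G j y. W (augm (G y) z)) + ennreal e) (at x within K)"
proof -
  define mx where "mx = (INF z\<in>Lambda G j x. W (augm (G x) z))"
  show ?thesis
  proof (cases "mx < ennreal e")
    case True
    then show ?thesis unfolding mx_def[symmetric]
      by (intro always_eventually allI) (metis add_0 add_strict_mono not_gr_zero)
  next
    case False
    then have le: "ennreal e \<le> mx" by simp
    have "mx - ennreal e < mx" using fin e le unfolding mx_def[symmetric]
      by (metis ennreal_between ennreal_less_zero_iff gr_zeroI order.strict_iff_not)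
    from lsc[OF W G x this[unfolded mx_def]] show ?thesis
      unfolding mx_def[symmetric]
    proof (rule eventually_mono)
      fix y assume "mx - ennreal e < (INF z\<in>Lambda G j y. W (augm (G y) z))"
      then show "mx < (INF z\<in>Lambda G j y. W (augm (G y) z)) + ennreal e"
        using le fin unfolding mx_def[symmetric]
        by (simp add: minus_less_iff_ennreal)
    qed
  qed
qed

lemma local_good:
  fixes W :: "real^3^3 \<Rightarrow> ennreal" and G :: "real^2 \<Rightarrow> real^2^3"
  assumes W: "continuous_on UNIV W" and G: "continuous_on K G" and x: "x \<in> K"
    and z0: "1 / real j < z0 \<bullet> nv (G x)" "norm z0 < real j"
    and Wz0: "W (augm (G x) z0) < top" and e: "0 < e"
  shows "\<exists>\<zeta> \<alpha> r. 0 < \<alpha> \<and> 0 < r \<and> (\<forall>y\<in>K. dist y x < r \<longrightarrow>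
     1 / real j + \<alpha> \<le> \<zeta> \<bullet> nv (G y) \<and> norm \<zeta> \<le> real j - \<alpha> \<and>
     W (augm (G y) \<zeta>) < (INF z\<in>Lambda G j y. W (augm (G y) z)) + ennreal e)"
proof -
  define m where "m y = (INF z\<in>Lambda G j y. W (augm (G y) z))" for y
  define e2 where "e2 = ennreal (e/2)"
  have z0L: "z0 \<in> Lambda G j x" using z0 unfolding Lambda_iff by auto
  have mfin: "m x < top" unfolding m_def using z0L Wz0 by (meson INF_lower le_less_trans)
  have "m x < m x + e2" unfolding e2_def using mfin e by simp
  then obtain z1 where z1: "z1 \<in> Lambda G j x" "W (augm (G x) z1) < m x + e2"
    unfolding m_def by (auto simp: INF_less_iff)
  have isW: "isCont W F" for F using W by (simp add: continuous_on_eq_continuous_at)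
  have "((\<lambda>t. augm (G x) (z1 + t *\<^sub>R (z0 - z1))) \<longlongrightarrow> augm (G x) (z1 + 0 *\<^sub>R (z0 - z1))) (at_right 0)"
    by (intro tendsto_intros)
  then have "((\<lambda>t. W (augm (G x) (z1 + t *\<^sub>R (z0 - z1)))) \<longlongrightarrow> W (augm (G x) z1)) (at_right 0)"
    using isCont_tendsto_compose[OF isW] by simp
  then have ev1: "eventually (\<lambda>t. W (augm (G x) (z1 + t *\<^sub>R (z0 - z1))) < m x + e2) (at_right 0)"
    using z1(2) by (rule order_tendstoD)
  have ev2: "eventually (\<lambda>t::real. 0 < t \<and> t < 1) (at_right 0)"
    unfolding eventually_at_right_field by (intro exI[of _ 1]) auto
  obtain t where t: "0 < t" "t < 1" "W (augm (G x) (z1 + t *\<^sub>R (z0 - z1))) < m x + e2"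
    using eventually_happens'[OF trivial_limit_at_right_real eventually_conj[OF ev1 ev2]] by blast
  define \<zeta> where "\<zeta> = z1 + t *\<^sub>R (z0 - z1)"
  have \<zeta>eq: "\<zeta> = (1 - t) *\<^sub>R z1 + t *\<^sub>R z0" unfolding \<zeta>_def by (simp add: algebra_simps)
  have z1i: "1 / real j \<le> z1 \<bullet> nv (G x)" "norm z1 \<le> real j" using z1(1) unfolding Lambda_iff by auto
  have "\<zeta> \<bullet> nv (G x) = (1 - t) * (z1 \<bullet> nv (G x)) + t * (z0 \<bullet> nv (G x))"
    unfolding \<zeta>eq by (simp add: inner_add_left)
  also have "\<dots> > (1 - t) * (1 / real j) + t * (1 / real j)"
    using z1i z0 t by (intro add_le_less_mono mult_left_mono mult_strict_left_mono) auto
  moreover have "(1 - t) * (1 / real j) + t * (1 / real j) = 1 / real j" by (simp add: add_divide_distrib[symmetric])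
  ultimately have \<zeta>n: "\<zeta> \<bullet> nv (G x) > 1 / real j" by linarith
  have "norm \<zeta> \<le> (1 - t) * norm z1 + t * norm z0"
    unfolding \<zeta>eq using t by (metis abs_of_nonneg less_eq_real_def norm_scaleR norm_triangle_ineq diff_ge_0_iff_ge)
  also have "\<dots> < (1 - t) * real j + t * real j"
    using z1i z0 t by (intro add_le_less_mono mult_left_mono mult_strict_left_mono) auto
  moreover have "(1 - t) * real j + t * real j = real j" by (simp add: algebra_simps)
  ultimately have \<zeta>norm: "norm \<zeta> < real j" by linarith
  define \<alpha> where "\<alpha> = min ((\<zeta> \<bullet> nv (G x) - 1 / real j) / 2) (real j - norm \<zeta>)"
  have \<alpha>: "0 < \<alpha>" unfolding \<alpha>_def using \<zeta>n \<zeta>norm by auto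
  have Gt: "(G \<longlongrightarrow> G x) (at x within K)"
    using G x by (simp add: continuous_on_eq_continuous_within continuous_within)
  have "((\<lambda>y. \<zeta> \<bullet> nv (G y)) \<longlongrightarrow> \<zeta> \<bullet> nv (G x)) (at x within K)"
    by (intro tendsto_intros Gt)
  then have evA: "eventually (\<lambda>y. 1 / real j + \<alpha> < \<zeta> \<bullet> nv (G y)) (at x within K)"
  proof (rule order_tendstoD)
    have "\<alpha> \<le> (\<zeta> \<bullet> nv (G x) - 1 / real j) / 2" unfolding \<alpha>_def by (rule min.cobounded1)
    then show "1 / real j + \<alpha> < \<zeta> \<bullet> nv (G x)" using \<zeta>n by argo
  qed
  have "((\<lambda>y. augm (G y) \<zeta>) \<longlongrightarrow> augm (G x) \<zeta>) (at x within K)"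
    by (intro tendsto_intros Gt)
  then have "((\<lambda>y. W (augm (G y) \<zeta>)) \<longlongrightarrow> W (augm (G x) \<zeta>)) (at x within K)"
    using isCont_tendsto_compose[OF isW] by blast
  then have evB: "eventually (\<lambda>y. W (augm (G y) \<zeta>) < m x + e2) (at x within K)"
    using t(3) unfolding \<zeta>_def by (rule order_tendstoD)
  have evC: "eventually (\<lambda>y. m x < m y + e2) (at x within K)"
    using lsc_add[OF W G x mfin[unfolded m_def], of "e/2"] e unfolding m_def e2_def by simp
  have key: "W (augm (G y) \<zeta>) < m y + ennreal e" if "W (augm (G y) \<zeta>) < m x + e2" "m x < m y + e2" for y
  proof -
    have "ennreal e = e2 + e2" unfolding e2_def using e by (simp flip: ennreal_plus)
    then have "m y + ennreal e = (m y + e2) + e2" by (simp add: add.assoc)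
    moreover have "m x + e2 \<le> (m y + e2) + e2" using that(2) by (intro add_right_mono) simp
    ultimately show ?thesis using that(1) by (metis order_less_le_trans)
  qed
  obtain d where d: "d > 0" "\<forall>y\<in>K. y \<noteq> x \<and> dist y x < d \<longrightarrow>
      (1 / real j + \<alpha> < \<zeta> \<bullet> nv (G y) \<and> W (augm (G y) \<zeta>) < m x + e2) \<and> m x < m y + e2"
    using eventually_conj[OF eventually_conj[OF evA evB] evC] unfolding eventually_at by blast
  have atx: "W (augm (G x) \<zeta>) < m x + ennreal e"
  proof -
    have "e2 \<le> ennreal e" unfolding e2_def using e by simp
    then show ?thesis using t(3) unfolding \<zeta>_def by (meson add_left_mono order_less_le_trans)
  qed
  show ?thesis
  proof (intro exI conjI ballI impI)
    show "0 < \<alpha>" "0 < d" using \<alpha> d by auto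
    fix y assume y: "y \<in> K" "dist y x < d"
    have "\<alpha> \<le> real j - norm \<zeta>" unfolding \<alpha>_def by (rule min.cobounded2)
    then show "norm \<zeta> \<le> real j - \<alpha>" by argo
    show "1 / real j + \<alpha> \<le> \<zeta> \<bullet> nv (G y)"
    proof (cases "y = x")
      case True
      have "\<alpha> \<le> (\<zeta> \<bullet> nv (G x) - 1 / real j) / 2" unfolding \<alpha>_def by (rule min.cobounded1)
      then show ?thesis using \<zeta>n True by simp
    next
      case False then show ?thesis using d y by force
    qed
    show "W (augm (G y) \<zeta>) < (INF z\<in>Lambda G j y. W (augm (G y) z)) + ennreal e"
      using d y key atx unfolding m_def[symmetric] by (cases "y = x") auto
  qed
qed



lemma meas_open_sets:
  fixes f :: "real^2 \<Rightarrow> ennreal"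
  assumes "\<And>a. open {x\<in>\<Omega>. a < f x}"
  shows "(\<lambda>x. f x * indicator \<Omega> x) \<in> borel_measurable lebesgue"
proof (rule borel_measurableI_greater)
  fix a :: ennreal
  have "{x \<in> space lebesgue. a < f x * indicator \<Omega> x} = {x\<in>\<Omega>. a < f x}"
    by (auto simp: indicator_def split: if_splits)
  then show "{x \<in> space lebesgue. a < f x * indicator \<Omega> x} \<in> sets lebesgue"
    using assms[of a] by simp
qed

lemma meas_cont:
  fixes f :: "real^2 \<Rightarrow> ennreal"
  assumes "open \<Omega>" "continuous_on \<Omega> f"
  shows "(\<lambda>x. f x * indicator \<Omega> x) \<in> borel_measurable lebesgue"
proof (rule meas_open_sets)
  fix a
  have "\<forall>B. open B \<longrightarrow> open (f -` B \<inter> \<Omega>)"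
    using iffD1[OF continuous_on_open_vimage[OF assms(1)] assms(2)] .
  then have "open (f -` {a<..} \<inter> \<Omega>)" by simp
  moreover have "f -` {a<..} \<inter> \<Omega> = {x\<in>\<Omega>. a < f x}" by auto
  ultimately show "open {x\<in>\<Omega>. a < f x}" by metis
qed

lemma meas_lsc:
  fixes f :: "real^2 \<Rightarrow> ennreal"
  assumes "open \<Omega>" "\<Omega> \<subseteq> K" "\<And>x a. x \<in> \<Omega> \<Longrightarrow> a < f x \<Longrightarrow> eventually (\<lambda>y. a < f y) (at x within K)"
  shows "(\<lambda>x. f x * indicator \<Omega> x) \<in> borel_measurable lebesgue"
proof (rule meas_open_sets)
  fix a
  show "open {x\<in>\<Omega>. a < f x}"
  proof (rule openI)
    fix x assume x: "x \<in> {x\<in>\<Omega>. a < f x}"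
    obtain e where e: "e > 0" "ball x e \<subseteq> \<Omega>" using assms(1) x openE by blast
    obtain d where d: "d > 0" "\<forall>y\<in>K. y \<noteq> x \<and> dist y x < d \<longrightarrow> a < f y"
      using assms(3)[of x a] x unfolding eventually_at by auto
    show "\<exists>e>0. ball x e \<subseteq> {x\<in>\<Omega>. a < f x}"
    proof (intro exI conjI)
      show "min d e > 0" using d e by simp
      show "ball x (min d e) \<subseteq> {x\<in>\<Omega>. a < f x}"
      proof
        fix y assume y: "y \<in> ball x (min d e)"
        then have "y \<in> \<Omega>" using e by auto
        moreover have "a < f y"
          using d \<open>y \<in> \<Omega>\<close> assms(2) y x by (cases "y = x") (auto simp: dist_commute)
        ultimately show "y \<in> {x\<in>\<Omega>. a < f x}" by simp
      qed
    qed
  qed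
qed

lemma convP:
  fixes a b v :: "real^3"
  assumes "lo \<le> a \<bullet> v \<and> norm a \<le> hi" "lo \<le> b \<bullet> v \<and> norm b \<le> hi" "0 \<le> t" "t \<le> 1"
  shows "lo \<le> (t *\<^sub>R a + (1 - t) *\<^sub>R b) \<bullet> v \<and> norm (t *\<^sub>R a + (1 - t) *\<^sub>R b) \<le> hi"
proof
  have "(t *\<^sub>R a + (1 - t) *\<^sub>R b) \<bullet> v = t * (a \<bullet> v) + (1 - t) * (b \<bullet> v)"
    by (simp add: inner_add_left)
  also have "\<dots> \<ge> t * lo + (1 - t) * lo"
    using assms by (intro add_mono mult_left_mono) auto
  moreover have "t * lo + (1 - t) * lo = lo" by (simp add: algebra_simps)
  ultimately show "lo \<le> (t *\<^sub>R a + (1 - t) *\<^sub>R b) \<bullet> v" by linarith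
  have "norm (t *\<^sub>R a + (1 - t) *\<^sub>R b) \<le> norm (t *\<^sub>R a) + norm ((1 - t) *\<^sub>R b)"
    by (rule norm_triangle_ineq)
  also have "\<dots> = t * norm a + (1 - t) * norm b" using assms(3,4) by simp
  also have "\<dots> \<le> t * hi + (1 - t) * hi"
    using assms by (intro add_mono mult_left_mono) auto
  moreover have "t * hi + (1 - t) * hi = hi" by (simp add: algebra_simps)
  ultimately show "norm (t *\<^sub>R a + (1 - t) *\<^sub>R b) \<le> hi" by linarith
qed

theorem lemma4p7:
  fixes W :: "real^3^3 \<Rightarrow> ennreal" and p :: real
  assumes p: "1 < p"
    and H1: "continuous_on UNIV W"
    and H2: "\<And>R F. R \<in> SO3 \<Longrightarrow> W (R ** F) = W F"
    and H3: "\<And>F. W F < \<infinity> \<longleftrightarrow> det F > 0"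
    and H4: "\<exists>C1>0. \<forall>F. ennreal (C1 * norm F powr p - 1 / C1) \<le> W F"
    and H5: "\<forall>\<delta>>0. \<exists>c. \<forall>F. det F \<ge> \<delta> \<longrightarrow> W F \<le> ennreal (c * (1 + norm F powr p))"
  shows "\<exists>J :: real \<Rightarrow> real \<Rightarrow> nat. \<forall>(\<Omega> :: (real^2) set) (\<eta>::real) (G :: real^2 \<Rightarrow> real^2^3).
           open \<Omega> \<and> bounded \<Omega> \<and> \<eta> > 0 \<and>
           uniformly_continuous_on (closure \<Omega>) G \<and>
           (\<forall>x\<in>closure \<Omega>. norm (cross3 (column 1 (G x)) (column 2 (G x))) \<ge> \<eta>) \<longrightarrow>
           (\<forall>j\<ge>J \<eta> (SUP x\<in>closure \<Omega>. norm (G x)). j \<ge> 1 \<longrightarrow>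
              (INF \<phi>\<in>{\<phi> :: real^2 \<Rightarrow> real^3. smooth_map \<phi> \<and> (\<forall>x\<in>closure \<Omega>. \<phi> x \<in> Lambda G j x)}.
                  \<integral>\<^sup>+ x\<in>\<Omega>. W (augm (G x) (\<phi> x)) \<partial>lebesgue)
              = (\<integral>\<^sup>+ x\<in>\<Omega>. (INF z\<in>Lambda G j x. W (augm (G x) z)) \<partial>lebesgue))"
proof (intro exI[of _ "\<lambda>\<eta> s. nat \<lceil>4 / \<eta>\<rceil> + 1"] allI impI)
  fix \<Omega> :: "(real^2) set" and \<eta> :: real and G :: "real^2 \<Rightarrow> real^2^3" and j :: nat
  assume hyp: "open \<Omega> \<and> bounded \<Omega> \<and> \<eta> > 0 \<and> uniformly_continuous_on (closure \<Omega>) G \<and>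
           (\<forall>x\<in>closure \<Omega>. norm (cross3 (column 1 (G x)) (column 2 (G x))) \<ge> \<eta>)"
    and jJ: "nat \<lceil>4 / \<eta>\<rceil> + 1 \<le> j" and j1: "1 \<le> j"
  define K where "K = closure \<Omega>"
  have oO: "open \<Omega>" and bO: "bounded \<Omega>" and eta: "\<eta> > 0" using hyp by auto
  have OK: "\<Omega> \<subseteq> K" unfolding K_def by (rule closure_subset)
  have cK: "compact K" unfolding K_def using bO by (simp add: compact_closure)
  have Gc: "continuous_on K G" unfolding K_def using hyp uniformly_continuous_imp_continuous by blast
  have nvc: "continuous_on K (\<lambda>y. nv (G y))"
    using Gc unfolding continuous_on_def by (auto intro!: tendsto_intros)
  have neta: "\<eta> \<le> norm (nv (G y))" if "y \<in> K" for y
    using hyp that unfolding K_def nv_def by auto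
  have jr1: "1 \<le> real j" using j1 by simp
  have j4: "4 \<le> real j * \<eta>"
  proof -
    have "4 / \<eta> \<le> real j" using jJ by linarith
    then show ?thesis using eta by (simp add: field_simps)
  qed
  obtain SG where SG: "\<And>y. y \<in> K \<Longrightarrow> norm (G y) \<le> SG"
    using compact_imp_bounded[OF compact_continuous_image[OF Gc cK]] unfolding bounded_iff by auto
  obtain Bn where Bn: "\<And>y. y \<in> K \<Longrightarrow> norm (nv (G y)) \<le> Bn"
    using compact_imp_bounded[OF compact_continuous_image[OF nvc cK]] unfolding bounded_iff by auto
  define m where "m y = (INF z\<in>Lambda G j y. W (augm (G y) z))" for y
  define z0 where "z0 y = (real j / (2 * norm (nv (G y)))) *\<^sub>R nv (G y)" for y
  have z0n: "z0 y \<bullet> nv (G y) = real j / 2 * norm (nv (G y))" "norm (z0 y) = real j / 2" if "y \<in> K" for y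
  proof -
    have pos: "norm (nv (G y)) > 0" using neta[OF that] eta by linarith
    show "z0 y \<bullet> nv (G y) = real j / 2 * norm (nv (G y))"
      unfolding z0_def using pos by (simp add: power2_norm_eq_inner[symmetric] power2_eq_square)
    show "norm (z0 y) = real j / 2"
      unfolding z0_def using pos by simp
  qed
  have z0big: "2 \<le> z0 y \<bullet> nv (G y)" if "y \<in> K" for y
  proof -
    have "real j * \<eta> \<le> real j * norm (nv (G y))" using neta[OF that] by (intro mult_left_mono) auto
    then show ?thesis using z0n[OF that] j4 by simp
  qed
  have invj: "1 / real j \<le> 1" using jr1 by simp
  have z0L: "z0 y \<in> Lambda G j y" if "y \<in> K" for y
    unfolding Lambda_iff using z0big[OF that] z0n[OF that] invj by auto
  have z0c: "continuous_on K z0"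
  proof -
    have "\<forall>y\<in>K. norm (nv (G y)) \<noteq> 0" using neta eta by force
    then show ?thesis unfolding z0_def using nvc
      by (intro continuous_intros) auto
  qed
  obtain c where c: "\<And>F. det F \<ge> 1 / real j \<Longrightarrow> W F \<le> ennreal (c * (1 + norm F powr p))"
    using H5 jr1 by (metis divide_pos_pos of_nat_0_less_iff zero_less_one less_le_trans j1 le_numeral_extra(2) of_nat_le_iff)
  define BW where "BW = ennreal (\<bar>c\<bar> * (1 + (SG + real j) powr p))"
  have WB: "W (augm (G y) z) \<le> BW" if "y \<in> K" "z \<in> Lambda G j y" for y z
  proof -
    have d: "1 / real j \<le> det (augm (G y) z)" using that(2) unfolding Lambda_iff det_augm by simp
    have nz: "norm z \<le> real j" using that(2) unfolding Lambda_iff by simp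
    have nF: "norm (augm (G y) z) \<le> SG + real j"
      using norm_augm_le[of "G y" z] SG[OF that(1)] nz by linarith
    have pw: "norm (augm (G y) z) powr p \<le> (SG + real j) powr p"
      by (rule powr_mono2) (use p nF in auto)
    have X0: "0 \<le> 1 + norm (augm (G y) z) powr p" by (simp add: add_nonneg_nonneg)
    have "c * (1 + norm (augm (G y) z) powr p) \<le> \<bar>c\<bar> * (1 + norm (augm (G y) z) powr p)"
      using X0 by (intro mult_right_mono) auto
    also have "\<dots> \<le> \<bar>c\<bar> * (1 + (SG + real j) powr p)"
      using pw by (intro mult_left_mono) auto
    finally have "ennreal (c * (1 + norm (augm (G y) z) powr p)) \<le> BW"
      unfolding BW_def by (rule ennreal_leI)
    then show ?thesis using c[OF d] by (rule order_trans[rotated])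
  qed
  have BWfin: "BW < top" unfolding BW_def by simp
  have mfin: "m y < top" if "y \<in> K" for y
  proof -
    have "m y \<le> W (augm (G y) (z0 y))" unfolding m_def using z0L[OF that] by (rule INF_lower)
    also have "\<dots> \<le> BW" using WB[OF that z0L[OF that]] .
    finally show ?thesis using BWfin by simp
  qed
  have mmeas: "(\<lambda>x. m x * indicator \<Omega> x) \<in> borel_measurable lebesgue"
    using oO OK
  proof (rule meas_lsc)
    fix x a assume "x \<in> \<Omega>" "a < m x"
    then show "eventually (\<lambda>y. a < m y) (at x within K)"
      unfolding m_def using lsc[OF H1 Gc] OK by blast
  qed
  have Ofin: "\<Omega> \<in> fmeasurable lebesgue"
    using bounded_set_imp_lmeasurable[OF bO] oO by simp
  define LHS where "LHS = (INF \<phi>\<in>{\<phi> :: real^2 \<Rightarrow> real^3. smooth_map \<phi> \<and> (\<forall>x\<in>K. \<phi> x \<in> Lambda G j x)}.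
                  \<integral>\<^sup>+ x\<in>\<Omega>. W (augm (G x) (\<phi> x)) \<partial>lebesgue)"
  define RHS where "RHS = (\<integral>\<^sup>+ x\<in>\<Omega>. m x \<partial>lebesgue)"
  have ge: "RHS \<le> LHS"
    unfolding LHS_def RHS_def
  proof (rule INF_greatest)
    fix \<phi> assume "\<phi> \<in> {\<phi> :: real^2 \<Rightarrow> real^3. smooth_map \<phi> \<and> (\<forall>x\<in>K. \<phi> x \<in> Lambda G j x)}"
    then have ph: "\<And>x. x \<in> K \<Longrightarrow> \<phi> x \<in> Lambda G j x" by auto
    show "(\<integral>\<^sup>+ x\<in>\<Omega>. m x \<partial>lebesgue) \<le> (\<integral>\<^sup>+ x\<in>\<Omega>. W (augm (G x) (\<phi> x)) \<partial>lebesgue)"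
    proof (rule nn_integral_mono)
      fix x
      show "m x * indicator \<Omega> x \<le> W (augm (G x) (\<phi> x)) * indicator \<Omega> x"
      proof (cases "x \<in> \<Omega>")
        case True
        then have "m x \<le> W (augm (G x) (\<phi> x))" unfolding m_def using ph OK by (auto intro: INF_lower)
        then show ?thesis using True by simp
      qed simp
    qed
  qed
  have main: "LHS \<le> RHS + ennreal \<epsilon> * emeasure lebesgue \<Omega>" if \<epsilon>: "\<epsilon> > 0" for \<epsilon>
  proof -
    have "\<forall>x\<in>K. \<exists>\<zeta> \<alpha> r. 0 < \<alpha> \<and> 0 < r \<and> (\<forall>y\<in>K. dist y x < r \<longrightarrow>
       1 / real j + \<alpha> \<le> \<zeta> \<bullet> nv (G y) \<and> norm \<zeta> \<le> real j - \<alpha> \<and>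
       W (augm (G y) \<zeta>) < m y + ennreal \<epsilon>)"
    proof
      fix x assume x: "x \<in> K"
      have "1 / real j < z0 x \<bullet> nv (G x)" using z0big[OF x] invj by linarith
      moreover have "norm (z0 x) < real j" using z0n[OF x] jr1 by simp
      moreover have "W (augm (G x) (z0 x)) < top" using WB[OF x z0L[OF x]] BWfin by simp
      ultimately show "\<exists>\<zeta> \<alpha> r. 0 < \<alpha> \<and> 0 < r \<and> (\<forall>y\<in>K. dist y x < r \<longrightarrow>
       1 / real j + \<alpha> \<le> \<zeta> \<bullet> nv (G y) \<and> norm \<zeta> \<le> real j - \<alpha> \<and>
       W (augm (G y) \<zeta>) < m y + ennreal \<epsilon>)"
        using local_good[OF H1 Gc x _ _ _ \<epsilon>] unfolding m_def by blast
    qed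
    then obtain Z A R where ZAR: "\<And>x. x \<in> K \<Longrightarrow> 0 < A x \<and> 0 < R x \<and> (\<forall>y\<in>K. dist y x < R x \<longrightarrow>
       1 / real j + A x \<le> Z x \<bullet> nv (G y) \<and> norm (Z x) \<le> real j - A x \<and>
       W (augm (G y) (Z x)) < m y + ennreal \<epsilon>)"
      by metis
    have "K \<subseteq> (\<Union>x\<in>K. ball x (R x))" using ZAR by auto
    then obtain F where F: "F \<subseteq> K" "finite F" "K \<subseteq> (\<Union>x\<in>F. ball x (R x))"
      using compactE_image[OF cK, of K "\<lambda>x. ball x (R x)"] by blast
    obtain xs where xs: "set xs = F" using finite_list[OF F(2)] by blast
    define L where "L = map (\<lambda>x. (ball x (R x), Z x)) xs"
    have setL: "set L = (\<lambda>x. (ball x (R x), Z x)) ` F" unfolding L_def xs[symmetric] by simp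
    define \<alpha> where "\<alpha> = Min (insert (1/2) (A ` F))"
    have \<alpha>pos: "0 < \<alpha>" unfolding \<alpha>_def using F ZAR by auto
    have \<alpha>half: "\<alpha> \<le> 1/2" unfolding \<alpha>_def using F by (intro Min_le) auto
    have \<alpha>A: "\<alpha> \<le> A x" if "x \<in> F" for x unfolding \<alpha>_def using F that by auto
    define P where "P y z \<longleftrightarrow> 1 / real j + \<alpha> \<le> z \<bullet> nv (G y) \<and> norm z \<le> real j - \<alpha>" for y z
    have phiP: "P y (phi n L z0 y)" if y: "y \<in> K" for n y
    proof (rule phi_mem[where S=K, OF _ _ _ y])
      fix y and a b :: "real^3" and t :: real assume "P y a" "P y b" "0 \<le> t" "t \<le> 1"
      then show "P y (t *\<^sub>R a + (1 - t) *\<^sub>R b)" unfolding P_def by (rule convP)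
    next
      fix y assume y: "y \<in> K"
      show "P y (z0 y)" unfolding P_def using z0big[OF y] z0n(2)[OF y] invj \<alpha>half jr1 by (intro conjI) linarith+
    next
      fix U \<zeta> y assume U: "(U, \<zeta>) \<in> set L" "y \<in> K" "y \<in> U"
      then obtain x where x: "x \<in> F" "U = ball x (R x)" "\<zeta> = Z x" unfolding setL by auto
      have "dist y x < R x" using U x by (simp add: dist_commute)
      then show "P y \<zeta>" unfolding P_def using ZAR[of x] x F(1) U \<alpha>A[OF x(1)] by force
    qed
    define Bp where "Bp = max Bn 0"
    have Bp: "norm (nv (G y)) \<le> Bp" if "y \<in> K" for y using Bn[OF that] unfolding Bp_def by simp
    have Bp0: "0 \<le> Bp" unfolding Bp_def by simp
    define \<delta> where "\<delta> = \<alpha> / (Bp + 1)"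
    have \<delta>pos: "0 < \<delta>" unfolding \<delta>_def using \<alpha>pos Bp0 by simp
    have \<delta>le: "\<delta> \<le> \<alpha>" unfolding \<delta>_def using \<alpha>pos Bp0 by (simp add: field_simps)
    have \<delta>B: "\<delta> * Bp \<le> \<alpha>" unfolding \<delta>_def using \<alpha>pos Bp0 by (simp add: field_simps)
    have "\<forall>n. \<exists>g. polynomial_function g \<and> (\<forall>y\<in>K. norm (phi n L z0 y - g y) < \<delta> / real (Suc n))"
    proof
      fix n
      show "\<exists>g. polynomial_function g \<and> (\<forall>y\<in>K. norm (phi n L z0 y - g y) < \<delta> / real (Suc n))"
        using Stone_Weierstrass_polynomial_function[OF cK phi_cont[OF z0c]] \<delta>pos by simp
    qed
    from choice[OF this] obtain g where g0: "\<forall>n. polynomial_function (g n) \<and> (\<forall>y\<in>K. norm (phi n L z0 y - g n y) < \<delta> / real (Suc n))"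
      by blast
    have g: "\<And>n. polynomial_function (g n)"
      "\<And>n y. y \<in> K \<Longrightarrow> norm (phi n L z0 y - g n y) < \<delta> / real (Suc n)"
      using g0 by blast+
    have gL: "g n y \<in> Lambda G j y" if y: "y \<in> K" for n y
    proof -
      have e1: "norm (phi n L z0 y - g n y) < \<delta>"
      proof -
        have "\<delta> / real (Suc n) \<le> \<delta> / 1" using \<delta>pos by (intro divide_left_mono) auto
        then show ?thesis using g(2)[OF y, of n] by simp
      qed
      have Pp: "P y (phi n L z0 y)" using phiP[OF y] .
      have "norm (g n y) \<le> norm (phi n L z0 y) + norm (phi n L z0 y - g n y)"
        by (metis add.commute diff_diff_cancel norm_triangle_ineq4 add_le_cancel_left norm_minus_commute norm_triangle_sub)
      then have n1: "norm (g n y) \<le> real j" using Pp e1 \<delta>le unfolding P_def by linarith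
      have "\<bar>(phi n L z0 y - g n y) \<bullet> nv (G y)\<bar> \<le> norm (phi n L z0 y - g n y) * norm (nv (G y))"
        by (rule Cauchy_Schwarz_ineq2)
      also have "\<dots> \<le> \<delta> * Bp" using e1 Bp[OF y] \<delta>pos by (intro mult_mono) auto
      finally have "\<bar>(phi n L z0 y - g n y) \<bullet> nv (G y)\<bar> \<le> \<alpha>" using \<delta>B by linarith
      moreover have "g n y \<bullet> nv (G y) = phi n L z0 y \<bullet> nv (G y) - (phi n L z0 y - g n y) \<bullet> nv (G y)"
        by (simp add: inner_diff_left)
      ultimately have "1 / real j \<le> g n y \<bullet> nv (G y)" using Pp unfolding P_def by linarith
      then show ?thesis unfolding Lambda_iff using n1 by simp
    qed
    define f where "f n y = W (augm (G y) (g n y)) * indicator \<Omega> y" for n y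
    have LHSf: "LHS \<le> integral\<^sup>N lebesgue (f n)" for n
      unfolding LHS_def f_def
      by (rule INF_lower) (use g(1) gL pf_smooth in auto)
    have fmeas: "f n \<in> borel_measurable lebesgue" for n
      unfolding f_def
    proof (rule meas_cont[OF oO])
      have "continuous_on \<Omega> (\<lambda>y. augm (G y) (g n y))"
        using continuous_on_subset[OF Gc OK] continuous_on_polymonial_function[OF g(1)]
        by (intro augm_continuous_on) auto
      then show "continuous_on \<Omega> (\<lambda>y. W (augm (G y) (g n y)))"
        using continuous_on_compose2[OF H1] by blast
    qed
    have wmeas: "(\<lambda>y. BW * indicator \<Omega> y) \<in> borel_measurable lebesgue"
      by (rule meas_cont[OF oO continuous_on_const])
    have bound: "f n y \<le> BW * indicator \<Omega> y" for n y
      unfolding f_def using WB gL OK by (cases "y \<in> \<Omega>") auto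
    have Osets: "\<Omega> \<in> sets lebesgue" using oO by simp
    have Olt: "emeasure lebesgue \<Omega> < top" using fmeasurableD2[OF Ofin] less_top by blast
    have wint: "(\<integral>\<^sup>+ y. BW * indicator \<Omega> y \<partial>lebesgue) < \<infinity>"
      using nn_integral_cmult_indicator[OF Osets, of BW] BWfin Olt
      by (simp add: ennreal_mult_less_top)
    have lims: "limsup (\<lambda>n. integral\<^sup>N lebesgue (f n)) \<le> (\<integral>\<^sup>+ y. limsup (\<lambda>n. f n y) \<partial>lebesgue)"
      by (rule nn_integral_limsup[OF fmeas wmeas _ wint]) (auto intro: AE_I2 bound)
    have pw: "limsup (\<lambda>n. f n y) \<le> m y * indicator \<Omega> y + ennreal \<epsilon> * indicator \<Omega> y" for y
    proof (cases "y \<in> \<Omega>")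
      case False
      then show ?thesis unfolding f_def by (simp add: Limsup_const)
    next
      case True
      then have yK: "y \<in> K" using OK by auto
      have "y \<in> (\<Union>x\<in>F. ball x (R x))" using F(3) yK by blast
      then have yU: "y \<in> (\<Union>p\<in>set L. fst p)" unfolding setL by simp
      obtain U \<zeta> where U: "(U, \<zeta>) \<in> set L" "y \<in> U" "sel L z0 y = \<zeta>"
        using sel_mem[OF yU, of z0] by blast
      then obtain x where x: "x \<in> F" "U = ball x (R x)" "\<zeta> = Z x" unfolding setL by auto
      have ev: "eventually (\<lambda>n. phi n L z0 y = sel L z0 y) sequentially"
      proof (rule phi_event)
        fix U' \<zeta>' assume "(U', \<zeta>') \<in> set L"
        then obtain x' where x': "U' = ball x' (R x')" unfolding setL by auto
        have "ball x' (R x') \<noteq> (UNIV::(real^2) set)" using bounded_ball not_bounded_UNIV by metis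
        then show "open U' \<and> U' \<noteq> UNIV" using x' by auto
      qed
      have t1: "(\<lambda>n. phi n L z0 y) \<longlonglongrightarrow> \<zeta>"
        using tendsto_eventually[OF ev] U(3) by simp
      have t2: "(\<lambda>n. phi n L z0 y - g n y) \<longlonglongrightarrow> 0"
      proof (rule Lim_null_comparison)
        show "eventually (\<lambda>n. norm (phi n L z0 y - g n y) \<le> \<delta> / real (Suc n)) sequentially"
          using g(2)[OF yK] by (auto intro: always_eventually less_imp_le)
        show "(\<lambda>n. \<delta> / real (Suc n)) \<longlonglongrightarrow> 0"
          using LIMSEQ_Suc[OF lim_const_over_n[of \<delta>]] by simp
      qed
      have "(\<lambda>n. phi n L z0 y - (phi n L z0 y - g n y)) \<longlonglongrightarrow> \<zeta> - 0"
        by (rule tendsto_diff[OF t1 t2])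
      then have t3: "(\<lambda>n. g n y) \<longlonglongrightarrow> \<zeta>" by simp
      have isW: "isCont W F" for F using H1 by (simp add: continuous_on_eq_continuous_at)
      have "(\<lambda>n. augm (G y) (g n y)) \<longlonglongrightarrow> augm (G y) \<zeta>"
        by (intro tendsto_intros t3)
      then have "(\<lambda>n. W (augm (G y) (g n y))) \<longlonglongrightarrow> W (augm (G y) \<zeta>)"
        using isCont_tendsto_compose[OF isW] by blast
      then have "(\<lambda>n. f n y) \<longlonglongrightarrow> W (augm (G y) \<zeta>)" unfolding f_def using True by simp
      then have "limsup (\<lambda>n. f n y) = W (augm (G y) \<zeta>)"
        by (intro lim_imp_Limsup) auto
      also have "\<dots> < m y + ennreal \<epsilon>"
        using ZAR[of x] x F(1) U(2) yK by (auto simp: dist_commute)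
      finally show ?thesis using True by simp
    qed
    have "LHS \<le> limsup (\<lambda>n. integral\<^sup>N lebesgue (f n))"
      by (rule le_Limsup) (auto intro: always_eventually LHSf)
    also have "\<dots> \<le> (\<integral>\<^sup>+ y. limsup (\<lambda>n. f n y) \<partial>lebesgue)" by (rule lims)
    also have "\<dots> \<le> (\<integral>\<^sup>+ y. m y * indicator \<Omega> y + ennreal \<epsilon> * indicator \<Omega> y \<partial>lebesgue)"
      by (rule nn_integral_mono) (rule pw)
    also have "\<dots> = RHS + ennreal \<epsilon> * emeasure lebesgue \<Omega>"
      unfolding RHS_def
      using nn_integral_add[OF mmeas meas_cont[OF oO continuous_on_const, of "ennreal \<epsilon>"]]
        nn_integral_cmult_indicator[OF Osets] by simp
    finally show ?thesis .
  qed
  have le: "LHS \<le> RHS"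
  proof (rule ennreal_le_epsilon)
    fix e :: real assume e: "0 < e"
    have Olt: "emeasure lebesgue \<Omega> < top" using fmeasurableD2[OF Ofin] less_top by blast
    then obtain Mr where Mr: "emeasure lebesgue \<Omega> = ennreal Mr" "0 \<le> Mr"
      by (cases "emeasure lebesgue \<Omega>" rule: ennreal_cases) auto
    define \<epsilon> where "\<epsilon> = e / (Mr + 1)"
    have \<epsilon>: "\<epsilon> > 0" unfolding \<epsilon>_def using e Mr by simp
    have "\<epsilon> * Mr \<le> e" unfolding \<epsilon>_def using e Mr by (simp add: field_simps)
    then have "ennreal \<epsilon> * emeasure lebesgue \<Omega> \<le> ennreal e"
      using Mr \<epsilon> by (simp add: ennreal_mult'[symmetric] ennreal_leI)
    then show "LHS \<le> RHS + ennreal e"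
      using main[OF \<epsilon>] by (meson add_left_mono order_trans)
  qed
  have "LHS = RHS" using le ge by (rule antisym)
  then show "(INF \<phi>\<in>{\<phi> :: real^2 \<Rightarrow> real^3. smooth_map \<phi> \<and> (\<forall>x\<in>closure \<Omega>. \<phi> x \<in> Lambda G j x)}.
                  \<integral>\<^sup>+ x\<in>\<Omega>. W (augm (G x) (\<phi> x)) \<partial>lebesgue)
              = (\<integral>\<^sup>+ x\<in>\<Omega>. (INF z\<in>Lambda G j x. W (augm (G x) z)) \<partial>lebesgue)"
    unfolding LHS_def RHS_def K_def m_def .
qed

end
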